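(* Let $\mathcal A$ be a weighted ODCA over $\mathbb F$, $K=|Q|\cdot|C|$, $c$ a configuration with counter value $n$, $V\subseteq\mathbb F^{|Q|}$ a subspace and $S\subseteq C$. If $z$ is a minimal witness for $(c,\overline V,S,\mathbb N)$, then every counter value occurring in the run of $z$ from $c$ is less than $\max(n,K)+K^2$.
   Context: Fix a field $\mathbb{F}$ and a finite alphabet $\Sigma$. For $n\in\mathbb N$ let $\mathrm{sgn}(n)=0$ if $n=0$ and $1$ if $n>0$. A weighted ODCA is $\mathcal{A}=((C,\delta_0,\delta_1,p_0),(Q,\lambda,\Delta,\eta))$ where $C$ is a finite nonempty set of counter states, $\delta_0:C\times\Sigma\to C\times\{0,+1\}$ and $\delta_1:C\times\Sigma\to C\times\{-1,0,+1\}$ are deterministic counter transition functions, $p_0\in C$, $Q$ is a finite nonempty set of states, $\lambda,\eta\in\mathbb{F}^{|Q|}$, and $\Delta:\Sigma\times\{0,1\}\to\mathbb{F}^{|Q|\times|Q|}$. A configuration is a triple $(x,p,n)\in\mathbb{F}^{|Q|}\times C\times\mathbb{N}$ (weight vector, counter state, counter value). Reading $a\in\Sigma$ from $(x,p,n)$ with $d=\mathrm{sgn}(n)$ and $\delta_d(p,a)=(p',e)$ leads to $(x\Delta(a,d),p',n+e)$; for each word $w$ and configuration $c$ there is a unique run of $w$ from $c$. For a subspace $V\subseteq\mathbb F^{|Q|}$ let $\overline V=\mathbb F^{|Q|}\setminus V$. For $S\subseteq C$ and $X\subseteq\mathbb N$, a word $z$ is a witness for $(c,\overline V,S,X)$ if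 the run of $z$ from $c$ ends in a configuration $(x,p,n)$ with $x\in\overline V$, $p\in S$, $n\in X$; it is a minimal witness if no strictly shorter word is a witness. *)

theory Defs
  imports Main
begin

(* Weighted ODCA over a field 'f, alphabet 'a (finite type), counter states 'c (finite type C),
   states 'q (finite type Q).  Weight vectors in F^|Q| are functions 'q => 'f,
   matrices in F^{|Q| x |Q|} are functions 'q => 'q => 'f. *)

definition sgn_nat :: "nat \<Rightarrow> nat" where
  "sgn_nat n = (if n = 0 then 0 else 1)"

definition vec_mat :: "('q::finite \<Rightarrow> 'f::field) \<Rightarrow> ('q \<Rightarrow> 'q \<Rightarrow> 'f) \<Rightarrow> ('q \<Rightarrow> 'f)" where
  "vec_mat x M = (\<lambda>j. \<Sum>i\<in>UNIV. x i * M i j)"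

definition odca_wf :: "('c \<Rightarrow> 'a \<Rightarrow> 'c \<times> int) \<Rightarrow> ('c \<Rightarrow> 'a \<Rightarrow> 'c \<times> int) \<Rightarrow> bool" where
  "odca_wf delta0 delta1 \<longleftrightarrow>
     (\<forall>p a. snd (delta0 p a) \<in> {0, 1}) \<and> (\<forall>p a. snd (delta1 p a) \<in> {-1, 0, 1})"

type_synonym ('q, 'f, 'c) config = "('q \<Rightarrow> 'f) \<times> 'c \<times> nat"

definition odca_step ::
  "('c \<Rightarrow> 'a \<Rightarrow> 'c \<times> int) \<Rightarrow> ('c \<Rightarrow> 'a \<Rightarrow> 'c \<times> int) \<Rightarrow> ('a \<Rightarrow> nat \<Rightarrow> 'q::finite \<Rightarrow> 'q \<Rightarrow> 'f::field)
   \<Rightarrow> ('q, 'f, 'c) config \<Rightarrow> 'a \<Rightarrow> ('q, 'f, 'c) config" where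
  "odca_step delta0 delta1 Delta cfg a =
     (case cfg of (x, p, n) \<Rightarrow>
        let d = sgn_nat n;
            (p', e) = (if d = 0 then delta0 p a else delta1 p a)
        in (vec_mat x (Delta a d), p', nat (int n + e)))"

fun odca_run ::
  "('c \<Rightarrow> 'a \<Rightarrow> 'c \<times> int) \<Rightarrow> ('c \<Rightarrow> 'a \<Rightarrow> 'c \<times> int) \<Rightarrow> ('a \<Rightarrow> nat \<Rightarrow> 'q::finite \<Rightarrow> 'q \<Rightarrow> 'f::field)
   \<Rightarrow> ('q, 'f, 'c) config \<Rightarrow> 'a list \<Rightarrow> ('q, 'f, 'c) config list" where
  "odca_run delta0 delta1 Delta cfg [] = [cfg]"
| "odca_run delta0 delta1 Delta cfg (a # w) =
     cfg # odca_run delta0 delta1 Delta (odca_step delta0 delta1 Delta cfg a) w"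

definition odca_final where
  "odca_final delta0 delta1 Delta cfg w = last (odca_run delta0 delta1 Delta cfg w)"

definition is_subspace :: "('q \<Rightarrow> 'f::field) set \<Rightarrow> bool" where
  "is_subspace V \<longleftrightarrow> (\<lambda>_. 0) \<in> V \<and> (\<forall>x\<in>V. \<forall>y\<in>V. (\<lambda>i. x i + y i) \<in> V)
      \<and> (\<forall>c. \<forall>x\<in>V. (\<lambda>i. c * x i) \<in> V)"

(* z is a witness for (cfg, complement of V, S, X) *)
definition is_witness where
  "is_witness delta0 delta1 Delta cfg V S X z \<longleftrightarrow>
     (case odca_final delta0 delta1 Delta cfg z of (x, p, m) \<Rightarrow> x \<notin> V \<and> p \<in> S \<and> m \<in> X)"

definition is_min_witness where
  "is_min_witness delta0 delta1 Delta cfg V S X z \<longleftrightarrow>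
     is_witness delta0 delta1 Delta cfg V S X z \<and>
     (\<forall>z'. length z' < length z \<longrightarrow> \<not> is_witness delta0 delta1 Delta cfg V S X z')"

end

theory Submission
  imports Defs "HOL-Analysis.Cartesian_Space"
begin

lemma dep_vec:
  fixes v :: "nat \<Rightarrow> ('f::field)^'n::finite"
  assumes "finite I" "CARD('n) < card I"
  shows "\<exists>c. (\<exists>k\<in>I. c k \<noteq> 0) \<and> (\<Sum>k\<in>I. c k *s v k) = 0"
proof (cases "inj_on v I")
  case True
  let ?S = "v ` I"
  have fS: "finite ?S" using assms by simp
  have cS: "card ?S = card I" using True by (simp add: card_image)
  have "vec.dim ?S \<le> CARD('n)"
    using vec.dim_subset_UNIV[of ?S] by (simp add: vec.dimension_def card_cart_basis)
  then have "vec.dependent ?S" using vec.dependent_biggerset_general[of ?S] cS assms by linarith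
  then obtain u where u: "\<exists>x\<in>?S. u x \<noteq> 0" "(\<Sum>x\<in>?S. u x *s x) = 0"
    using vec.dependent_finite[OF fS] by blast
  have "(\<Sum>x\<in>?S. u x *s x) = (\<Sum>k\<in>I. u (v k) *s v k)"
    using sum.reindex[OF True, of "\<lambda>x. u x *s x"] by simp
  then show ?thesis using u by (intro exI[of _ "\<lambda>k. u (v k)"]) auto
next
  case False
  then obtain j k where jk: "j \<in> I" "k \<in> I" "j \<noteq> k" "v j = v k" unfolding inj_on_def by blast
  let ?c = "\<lambda>i. if i = j then (1::'f) else if i = k then -1 else 0"
  have "(\<Sum>i\<in>I. ?c i *s v i) = (\<Sum>i\<in>{j,k}. ?c i *s v i)"
    using assms(1) jk by (intro sum.mono_neutral_right) auto
  also have "\<dots> = 0" using jk by simp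
  finally show ?thesis using jk by (intro exI[of _ ?c]) auto
qed

lemma dep_fun:
  fixes v :: "nat \<Rightarrow> 'n::finite \<Rightarrow> 'f::field"
  assumes "finite I" "CARD('n) < card I"
  shows "\<exists>c. (\<exists>k\<in>I. c k \<noteq> 0) \<and> (\<forall>i. (\<Sum>k\<in>I. c k * v k i) = 0)"
proof -
  obtain c where c: "\<exists>k\<in>I. c k \<noteq> 0" "(\<Sum>k\<in>I. c k *s (\<chi> i. v k i)) = 0"
    using dep_vec[OF assms, of "\<lambda>k. \<chi> i. v k i"] by blast
  have "\<forall>i. (\<Sum>k\<in>I. c k * v k i) = 0"
  proof
    fix i
    have "(\<Sum>k\<in>I. c k *s (\<chi> i. v k i)) $ i = 0" using c(2) by simp
    then show "(\<Sum>k\<in>I. c k * v k i) = 0" by (simp add: sum_component)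
  qed
  then show ?thesis using c(1) by blast
qed

definition idm :: "'q \<Rightarrow> 'q \<Rightarrow> 'f::field" where "idm = (\<lambda>i j. if i = j then 1 else 0)"
definition mmul :: "('q::finite \<Rightarrow> 'q \<Rightarrow> 'f::field) \<Rightarrow> ('q \<Rightarrow> 'q \<Rightarrow> 'f) \<Rightarrow> ('q \<Rightarrow> 'q \<Rightarrow> 'f)" where
  "mmul A B = (\<lambda>i k. \<Sum>j\<in>UNIV. A i j * B j k)"

lemma vec_mat_assoc: "vec_mat (vec_mat x A) B = vec_mat x (mmul A B)"
  unfolding vec_mat_def mmul_def
  by (auto simp: sum_distrib_left sum_distrib_right mult.assoc intro!: ext sum.swap)

lemma vec_mat_idm[simp]: "vec_mat x idm = x"
  unfolding vec_mat_def idm_def by (auto simp: if_distrib cong: if_cong)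

lemma mmul_idm[simp]: "mmul idm A = A"
proof (intro ext)
  fix i k
  have "(\<Sum>j\<in>UNIV. idm i j * A j k) = (\<Sum>j\<in>UNIV. if i = j then A j k else 0)"
    unfolding idm_def by (intro sum.cong) auto
  then show "mmul idm A i k = A i k" unfolding mmul_def by simp
qed

lemma mmul_assoc: "mmul (mmul A B) C = mmul A (mmul B C)"
  unfolding mmul_def
  by (auto simp: sum_distrib_left sum_distrib_right mult.assoc intro!: ext sum.swap)

definition cstep :: "('c \<Rightarrow> 'a \<Rightarrow> 'c \<times> int) \<Rightarrow> ('c \<Rightarrow> 'a \<Rightarrow> 'c \<times> int) \<Rightarrow> 'c \<times> nat \<Rightarrow> 'a \<Rightarrow> 'c \<times> nat" where
  "cstep d0 d1 c a = (let pe = (if sgn_nat (snd c) = 0 then d0 (fst c) a else d1 (fst c) a)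
     in (fst pe, nat (int (snd c) + snd pe)))"

fun matw :: "('c \<Rightarrow> 'a \<Rightarrow> 'c \<times> int) \<Rightarrow> ('c \<Rightarrow> 'a \<Rightarrow> 'c \<times> int) \<Rightarrow> ('a \<Rightarrow> nat \<Rightarrow> 'q::finite \<Rightarrow> 'q \<Rightarrow> 'f::field)
   \<Rightarrow> 'c \<times> nat \<Rightarrow> 'a list \<Rightarrow> 'q \<Rightarrow> 'q \<Rightarrow> 'f" where
  "matw d0 d1 Delta c [] = idm"
| "matw d0 d1 Delta c (a # w) = mmul (Delta a (sgn_nat (snd c))) (matw d0 d1 Delta (cstep d0 d1 c a) w)"

lemma step_eq: "odca_step d0 d1 Delta (x, c) a = (vec_mat x (Delta a (sgn_nat (snd c))), cstep d0 d1 c a)"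
  by (cases c) (auto simp: odca_step_def cstep_def Let_def split: prod.splits)

lemma foldl_step: "foldl (odca_step d0 d1 Delta) (x, c) w
   = (vec_mat x (matw d0 d1 Delta c w), foldl (cstep d0 d1) c w)"
  by (induction w arbitrary: x c) (auto simp: step_eq vec_mat_assoc)

lemma matw_app: "matw d0 d1 Delta c (u @ w) = mmul (matw d0 d1 Delta c u) (matw d0 d1 Delta (foldl (cstep d0 d1) c u) w)"
  by (induction u arbitrary: c) (auto simp: mmul_assoc)

lemma run_ne[simp]: "odca_run d0 d1 Delta cfg w \<noteq> []"
  by (cases w) auto

lemma final_eq: "odca_final d0 d1 Delta cfg w = foldl (odca_step d0 d1 Delta) cfg w"
  unfolding odca_final_def by (induction w arbitrary: cfg) auto

lemma run_set: "cf \<in> set (odca_run d0 d1 Delta cfg w) \<Longrightarrow> \<exists>i\<le>length w. cf = foldl (odca_step d0 d1 Delta) cfg (take i w)"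
proof (induction w arbitrary: cfg)
  case Nil then show ?case by auto
next
  case (Cons a w)
  show ?case
  proof (cases "cf = cfg")
    case True then show ?thesis by (intro exI[of _ 0]) auto
  next
    case False
    then have "cf \<in> set (odca_run d0 d1 Delta (odca_step d0 d1 Delta cfg a) w)" using Cons.prems by auto
    from Cons.IH[OF this] obtain i where "i \<le> length w" "cf = foldl (odca_step d0 d1 Delta) (odca_step d0 d1 Delta cfg a) (take i w)" by blast
    then show ?thesis by (intro exI[of _ "Suc i"]) auto
  qed
qed

lemma cstep_bound:
  assumes "odca_wf d0 d1"
  shows "snd (cstep d0 d1 c a) \<le> snd c + 1 \<and> snd c \<le> snd (cstep d0 d1 c a) + 1"
proof -
  obtain pe where pe: "pe = (if sgn_nat (snd c) = 0 then d0 (fst c) a else d1 (fst c) a)" by blast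
  have "snd pe \<in> {-1,0,1}" using assms unfolding odca_wf_def pe by auto
  moreover have "snd (cstep d0 d1 c a) = nat (int (snd c) + snd pe)" unfolding cstep_def Let_def pe by simp
  ultimately show ?thesis by auto
qed

definition slow :: "(nat \<Rightarrow> nat) \<Rightarrow> nat \<Rightarrow> bool" where
  "slow f N \<longleftrightarrow> (\<forall>k<N. f (Suc k) \<le> f k + 1 \<and> f k \<le> f (Suc k) + 1)"

lemma ivt_up:
  assumes "slow f N" "i \<le> j" "j \<le> N" "f i \<le> l" "l \<le> f j"
  shows "\<exists>k. i \<le> k \<and> k \<le> j \<and> f k = l"
  using assms(2-5)
proof (induction j)
  case 0 then show ?case by auto
next
  case (Suc j)
  show ?case
  proof (cases "i = Suc j")
    case True then show ?thesis using Suc.prems by auto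
  next
    case False
    show ?thesis
    proof (cases "l \<le> f j")
      case True then show ?thesis using Suc False by (metis le_Suc_eq Suc_leD)
    next
      case False
      have "j < N" using Suc.prems by auto
      then have "f (Suc j) \<le> f j + 1 \<and> f j \<le> f (Suc j) + 1" using assms(1) unfolding slow_def by blast
      then have "f (Suc j) = l" using Suc.prems False by linarith
      then show ?thesis using Suc.prems by auto
    qed
  qed
qed

lemma ivt_down:
  assumes "slow f N" "i \<le> j" "j \<le> N" "l \<le> f i" "f j \<le> l"
  shows "\<exists>k. i \<le> k \<and> k \<le> j \<and> f k = l"
  using assms(2-5)
proof (induction j)
  case 0 then show ?case by auto
next
  case (Suc j)
  show ?case
  proof (cases "i = Suc j")
    case True then show ?thesis using Suc.prems by auto
  next
    case False
    show ?thesis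
    proof (cases "f j \<le> l")
      case True then show ?thesis using Suc False by (metis le_Suc_eq Suc_leD)
    next
      case False
      have "j < N" using Suc.prems by auto
      then have "f (Suc j) \<le> f j + 1 \<and> f j \<le> f (Suc j) + 1" using assms(1) unfolding slow_def by blast
      then have "f (Suc j) = l" using Suc.prems False by linarith
      then show ?thesis using Suc.prems by auto
    qed
  qed
qed

lemma last_visit:
  assumes "slow f N" "t \<le> N" "f 0 \<le> l" "l \<le> f t"
  shows "\<exists>a\<le>t. f a = l \<and> (\<forall>k. a < k \<and> k \<le> t \<longrightarrow> l < f k)"
proof -
  let ?A = "{k. k \<le> t \<and> f k = l}"
  have ne: "?A \<noteq> {}" using ivt_up[OF assms(1) _ assms(2) assms(3) assms(4)] by auto
  have fin: "finite ?A" by auto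
  let ?a = "Max ?A"
  have a: "?a \<in> ?A" using Max_in[OF fin ne] .
  have "l < f k" if h: "?a < k" "k \<le> t" for k
  proof (rule ccontr)
    assume "\<not> l < f k"
    then obtain k' where "k \<le> k'" "k' \<le> t" "f k' = l"
      using ivt_up[OF assms(1) h(2) assms(2), of l] assms(4) by auto
    then have "k' \<le> ?a" using Max_ge[OF fin] by auto
    then show False using h \<open>k \<le> k'\<close> by auto
  qed
  then show ?thesis using a by blast
qed

lemma first_visit:
  assumes "slow f N" "t \<le> e" "e \<le> N" "f e \<le> l" "l \<le> f t"
  shows "\<exists>b. t \<le> b \<and> b \<le> e \<and> f b = l \<and> (\<forall>k. t \<le> k \<and> k < b \<longrightarrow> l < f k)"
proof -
  let ?A = "{k. t \<le> k \<and> k \<le> e \<and> f k = l}"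
  have ne: "?A \<noteq> {}" using ivt_down[OF assms(1) assms(2) assms(3) assms(5) assms(4)] by auto
  have fin: "finite ?A" by auto
  let ?b = "Min ?A"
  have b: "?b \<in> ?A" using Min_in[OF fin ne] .
  have "l < f k" if h: "t \<le> k" "k < ?b" for k
  proof (rule ccontr)
    assume "\<not> l < f k"
    have kN: "k \<le> N" using h b assms by auto
    have lf: "l \<le> f t" using assms by auto
    have fk: "f k \<le> l" using \<open>\<not> l < f k\<close> by auto
    obtain k' where "t \<le> k'" "k' \<le> k" "f k' = l"
      using ivt_down[OF assms(1) h(1) kN lf fk] by auto
    then have "?b \<le> k'" using Min_le[OF fin] h b assms by auto
    then show False using h \<open>k' \<le> k\<close> by auto
  qed
  then show ?thesis using b by blast
qed

lemma pigeon:
  fixes f :: "nat \<Rightarrow> 'b::finite"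
  assumes "finite I" "CARD('b) * r < card I"
  shows "\<exists>y. r < card {l\<in>I. f l = y}"
proof (rule ccontr)
  assume "\<not> ?thesis"
  then have le: "\<forall>y. card {l\<in>I. f l = y} \<le> r" by (simp add: not_less)
  have e: "I = (\<Union>y\<in>UNIV. {l\<in>I. f l = y})" by auto
  have "card (\<Union>y\<in>UNIV. {l\<in>I. f l = y}) \<le> (\<Sum>y\<in>UNIV. card {l\<in>I. f l = y})"
    by (rule card_UN_le) simp
  then have "card I \<le> (\<Sum>y\<in>UNIV. card {l\<in>I. f l = y})"
    using e by simp
  also have "\<dots> \<le> (\<Sum>y\<in>(UNIV::'b set). r)" using le by (intro sum_mono) blast
  also have "\<dots> = CARD('b) * r" by simp
  finally show False using assms by linarith
qed

lemma subspace_sum: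
  assumes "is_subspace V" "finite I" "\<forall>k\<in>I. g k \<in> V"
  shows "(\<lambda>q. \<Sum>k\<in>I. c k * g k q) \<in> V"
  using assms(2,3)
proof (induction I rule: finite_induct)
  case empty then show ?case using assms(1) unfolding is_subspace_def by simp
next
  case (insert k I)
  have 1: "(\<lambda>q. c k * g k q) \<in> V" using assms(1) insert unfolding is_subspace_def by auto
  have 2: "(\<lambda>q. \<Sum>k\<in>I. c k * g k q) \<in> V" using insert by auto
  have "(\<lambda>q. \<Sum>k\<in>insert k I. c k * g k q) = (\<lambda>q. (c k * g k q) + (\<Sum>k\<in>I. c k * g k q))"
    using insert by auto
  moreover have add: "\<forall>x\<in>V. \<forall>y\<in>V. (\<lambda>i. x i + y i) \<in> V"
    using assms(1) unfolding is_subspace_def by blast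
  ultimately show ?case using add[rule_format, OF 1 2] by simp
qed

lemma triangle:
  fixes g :: "nat \<Rightarrow> 'q \<Rightarrow> 'f::field"
  assumes "is_subspace V" "finite I" "j \<in> I" "c j \<noteq> 0"
    "\<forall>q. (\<Sum>k\<in>I. c k * g k q) = 0"
    "\<forall>k\<in>I. k \<noteq> j \<longrightarrow> c k \<noteq> 0 \<longrightarrow> g k \<in> V"
  shows "g j \<in> V"
proof -
  let ?J = "{k\<in>I. k \<noteq> j \<and> c k \<noteq> 0}"
  have fJ: "finite ?J" using assms(2) by auto
  have inV: "(\<lambda>q. \<Sum>k\<in>?J. (- c k / c j) * g k q) \<in> V"
    by (rule subspace_sum[OF assms(1) fJ]) (use assms(6) in auto)
  have "g j = (\<lambda>q. \<Sum>k\<in>?J. (- c k / c j) * g k q)"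
  proof
    fix q
    have "(\<Sum>k\<in>I. c k * g k q) = c j * g j q + (\<Sum>k\<in>I - {j}. c k * g k q)"
      using assms(2,3) by (simp add: sum.remove)
    also have "(\<Sum>k\<in>I - {j}. c k * g k q) = (\<Sum>k\<in>?J. c k * g k q)"
      using assms(2) by (intro sum.mono_neutral_right) auto
    finally have "c j * g j q = - (\<Sum>k\<in>?J. c k * g k q)" using assms(5)
      by (simp add: eq_neg_iff_add_eq_0 add.commute)
    then have "g j q = (- (\<Sum>k\<in>?J. c k * g k q)) / c j" using assms(4)
      by (simp add: field_simps)
    also have "\<dots> = (\<Sum>k\<in>?J. (- c k / c j) * g k q)"
      by (simp add: sum_divide_distrib sum_negf field_simps)
    finally show "g j q = (\<Sum>k\<in>?J. (- c k / c j) * g k q)" .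
  qed
  then show ?thesis using inV by simp
qed

lemma cstep_pos:
  assumes "0 < m"
  shows "cstep d0 d1 (q, m) a = (fst (d1 q a), nat (int m + snd (d1 q a)))"
  using assms unfolding cstep_def sgn_nat_def Let_def by auto

lemma d1_range: "odca_wf d0 d1 \<Longrightarrow> snd (d1 q a) \<in> {-1,0,1}"
  unfolding odca_wf_def by blast

lemma shift:
  assumes wf: "odca_wf d0 d1"
    and "\<forall>k<length w. d < snd (foldl (cstep d0 d1) (q,m) (take k w))" and "d \<le> m"
  shows "foldl (cstep d0 d1) (q, m-d) w = (fst (foldl (cstep d0 d1) (q,m) w), snd (foldl (cstep d0 d1) (q,m) w) - d)
    \<and> matw d0 d1 Delta (q, m-d) w = matw d0 d1 Delta (q,m) w"
  using assms(2,3)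
proof (induction w arbitrary: q m)
  case Nil then show ?case by simp
next
  case (Cons a w)
  have dm: "d < m" using Cons.prems(1) by force
  define e where "e = snd (d1 q a)"
  have e: "e \<in> {-1,0,1}" "cstep d0 d1 (q, m) a = (fst (d1 q a), nat (int m + e))"
    using d1_range[OF wf] cstep_pos[of m] dm unfolding e_def by auto
  have e2: "cstep d0 d1 (q, m - d) a = (fst (d1 q a), nat (int m + e) - d)"
    using cstep_pos[of "m-d" d0 d1 q a] dm e(1) unfolding e_def[symmetric] by auto
  have sg: "sgn_nat (m - d) = sgn_nat m" using dm by (simp add: sgn_nat_def)
  have p1: "\<forall>k<length w. d < snd (foldl (cstep d0 d1) (fst (d1 q a), nat (int m + e)) (take k w))"
  proof (intro allI impI)
    fix k assume "k < length w"
    then have "d < snd (foldl (cstep d0 d1) (q,m) (take (Suc k) (a # w)))" using Cons.prems(1) by auto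
    then show "d < snd (foldl (cstep d0 d1) (fst (d1 q a), nat (int m + e)) (take k w))" using e(2) by simp
  qed
  have p2: "d \<le> nat (int m + e)" using dm e(1) by auto
  note IH = Cons.IH[OF p1 p2]
  show ?case using IH e(2) e2 sg by simp
qed

lemma lin2:
  fixes u :: "nat \<Rightarrow> 'q::finite \<Rightarrow> 'f::field"
  assumes "\<forall>q. (\<Sum>k\<in>I. c k * u k q) = 0"
  shows "\<forall>q. (\<Sum>k\<in>I. c k * vec_mat (u k) T q) = 0"
proof
  fix q
  have "(\<Sum>k\<in>I. c k * vec_mat (u k) T q) = (\<Sum>k\<in>I. \<Sum>i\<in>UNIV. c k * u k i * T i q)"
    unfolding vec_mat_def by (simp add: sum_distrib_left mult.assoc)
  also have "\<dots> = (\<Sum>i\<in>UNIV. \<Sum>k\<in>I. c k * u k i * T i q)" by (rule sum.swap)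
  also have "\<dots> = (\<Sum>i\<in>UNIV. (\<Sum>k\<in>I. c k * u k i) * T i q)" by (simp add: sum_distrib_right)
  also have "\<dots> = 0" using assms by simp
  finally show "(\<Sum>k\<in>I. c k * vec_mat (u k) T q) = 0" .
qed

lemma lin1:
  fixes N :: "nat \<Rightarrow> 'q::finite \<Rightarrow> 'q \<Rightarrow> 'f::field"
  assumes "\<forall>a b. (\<Sum>k\<in>I. c k * N k a b) = 0"
  shows "\<forall>q. (\<Sum>k\<in>I. c k * vec_mat (vec_mat u (N k)) R q) = 0"
proof -
  have "\<forall>q. (\<Sum>k\<in>I. c k * vec_mat u (N k) q) = 0"
  proof
    fix q
    have "(\<Sum>k\<in>I. c k * vec_mat u (N k) q) = (\<Sum>k\<in>I. \<Sum>i\<in>UNIV. c k * N k i q * u i)"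
      unfolding vec_mat_def by (simp add: sum_distrib_left mult.assoc mult.commute mult.left_commute)
    also have "\<dots> = (\<Sum>i\<in>UNIV. \<Sum>k\<in>I. c k * N k i q * u i)" by (rule sum.swap)
    also have "\<dots> = (\<Sum>i\<in>UNIV. (\<Sum>k\<in>I. c k * N k i q) * u i)" by (simp add: sum_distrib_right)
    also have "\<dots> = 0" using assms by simp
    finally show "(\<Sum>k\<in>I. c k * vec_mat u (N k) q) = 0" .
  qed
  then show ?thesis by (rule lin2)
qed

lemma take_split: "i \<le> j \<Longrightarrow> take j z = take i z @ drop i (take j z)"
  by (metis append_take_drop_id min.absorb1 take_take)

lemma foldl_seg: "i \<le> j \<Longrightarrow> foldl f c (take j z) = foldl f (foldl f c (take i z)) (drop i (take j z))"
  by (metis foldl_append take_split)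

lemma mat_seg: "i \<le> j \<Longrightarrow> matw d0 d1 Delta c (take j z) =
   mmul (matw d0 d1 Delta c (take i z)) (matw d0 d1 Delta (foldl (cstep d0 d1) c (take i z)) (drop i (take j z)))"
  by (metis matw_app take_split)

lemma take_seg: "i + k \<le> j \<Longrightarrow> take k (drop i (take j z)) = drop i (take (i + k) z)"
  by (simp add: take_drop min_def add.commute)

lemma wit_iff: "is_witness d0 d1 Delta (x, c) V S UNIV w \<longleftrightarrow>
   vec_mat x (matw d0 d1 Delta c w) \<notin> V \<and> fst (foldl (cstep d0 d1) c w) \<in> S"
  unfolding is_witness_def final_eq foldl_step by (simp split: prod.splits)

theorem mainTheorem13:
  fixes delta0 delta1 :: "'c::finite \<Rightarrow> 'a::finite \<Rightarrow> 'c \<times> int"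
    and Delta :: "'a \<Rightarrow> nat \<Rightarrow> 'q::finite \<Rightarrow> 'q \<Rightarrow> 'f::field"
    and x :: "'q \<Rightarrow> 'f" and p :: 'c and n :: nat
    and V :: "('q \<Rightarrow> 'f) set" and S :: "'c set" and z :: "'a list"
  assumes "odca_wf delta0 delta1"
    and "is_subspace V"
    and "is_min_witness delta0 delta1 Delta (x, p, n) V S (UNIV :: nat set) z"
  shows "\<forall>cfg \<in> set (odca_run delta0 delta1 Delta (x, p, n) z).
           snd (snd cfg) < max n (card (UNIV :: 'q set) * card (UNIV :: 'c set)) + (card (UNIV :: 'q set) * card (UNIV :: 'c set))^2"
proof (rule ccontr)
  note wf = assms(1) and sub = assms(2)
  define c0 where "c0 = (p, n)"
  define CF where "CF i = foldl (cstep delta0 delta1) c0 (take i z)" for i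
  define cv where "cv i = snd (CF i)" for i
  define st where "st i = fst (CF i)" for i
  define len where "len = length z"
  define P where "P i = matw delta0 delta1 Delta c0 (take i z)" for i
  define U where "U i = vec_mat x (P i)" for i
  define K where "K = CARD('q) * CARD('c)"
  define M where "M = max n K"
  define L where "L = M + K^2"
  have K1: "1 \<le> K" unfolding K_def by (simp add: Suc_leI)
  have KK: "K \<le> K^2" using K1 by (simp add: power2_eq_square)
  have M1: "1 \<le> M" "K \<le> M" "n \<le> M" using K1 unfolding M_def by auto
  have CFpair: "CF i = (st i, cv i)" for i unfolding st_def cv_def by simp
  assume "\<not> ?thesis"
  then obtain cfg where cfg: "cfg \<in> set (odca_run delta0 delta1 Delta (x, p, n) z)" "L \<le> snd (snd cfg)"
    unfolding L_def M_def K_def by auto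
  obtain t where t: "t \<le> len" "cfg = foldl (odca_step delta0 delta1 Delta) (x, p, n) (take t z)"
    using run_set[OF cfg(1)] unfolding len_def by blast
  have cvt: "L \<le> cv t" using cfg(2) t(2) unfolding cv_def CF_def c0_def
    by (simp add: foldl_step)
  have cv0: "cv 0 = n" unfolding cv_def CF_def c0_def by simp
  have slow: "slow cv len"
    unfolding slow_def
  proof (intro allI impI)
    fix k assume "k < len"
    then have "take (Suc k) z = take k z @ [z ! k]" unfolding len_def by (simp add: take_Suc_conv_app_nth)
    then have "CF (Suc k) = cstep delta0 delta1 (CF k) (z ! k)" unfolding CF_def by simp
    then show "cv (Suc k) \<le> cv k + 1 \<and> cv k \<le> cv (Suc k) + 1"
      unfolding cv_def using cstep_bound[OF wf] by simp
  qed
  have minw: "is_witness delta0 delta1 Delta (x, p, n) V S UNIV z"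
    "\<And>z'. length z' < length z \<Longrightarrow> \<not> is_witness delta0 delta1 Delta (x, p, n) V S UNIV z'"
    using assms(3) unfolding is_min_witness_def by auto
  have CFlen: "CF len = foldl (cstep delta0 delta1) c0 z" unfolding CF_def len_def by simp
  have fin_notin: "vec_mat x (matw delta0 delta1 Delta c0 z) \<notin> V" and stS: "st len \<in> S"
    using minw(1) unfolding wit_iff c0_def st_def CF_def len_def by auto
  have shorter: "vec_mat x (matw delta0 delta1 Delta c0 z') \<in> V"
    if "length z' < len" "fst (foldl (cstep delta0 delta1) c0 z') = st len" for z'
    using minw(2)[of z'] that stS unfolding wit_iff c0_def len_def by auto
  have lv: "\<forall>l\<in>{M..L}. \<exists>a\<le>t. cv a = l \<and> (\<forall>k. a < k \<and> k \<le> t \<longrightarrow> l < cv k)"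
  proof
    fix l assume "l \<in> {M..L}"
    then show "\<exists>a\<le>t. cv a = l \<and> (\<forall>k. a < k \<and> k \<le> t \<longrightarrow> l < cv k)"
      using last_visit[OF slow t(1), of l] cv0 M1 cvt by auto
  qed
  then obtain A where A: "\<And>l. l \<in> {M..L} \<Longrightarrow> A l \<le> t \<and> cv (A l) = l \<and> (\<forall>k. A l < k \<and> k \<le> t \<longrightarrow> l < cv k)"
    by metis
  have Amono: "A l < A l'" if "l \<in> {M..L}" "l' \<in> {M..L}" "l < l'" for l l'
  proof (rule ccontr)
    assume "\<not> A l < A l'"
    then have "A l' < A l \<or> A l' = A l" by auto
    then show False using A[OF that(1)] A[OF that(2)] that(3) by force
  qed
  show False
  proof (cases "\<forall>k. t < k \<and> k \<le> len \<longrightarrow> M < cv k")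
    case True
    define I0 where "I0 = {M..M+K}"
    have I0L: "I0 \<subseteq> {M..L}" unfolding I0_def L_def using KK by auto
    have cI0: "card I0 = K + 1" unfolding I0_def by simp
    obtain s where s: "CARD('q) < card {l\<in>I0. st (A l) = s}"
    proof -
      have "finite I0" unfolding I0_def by simp
      then show ?thesis using that pigeon[of I0 "CARD('q)" "\<lambda>l. st (A l)"] cI0 unfolding K_def
        by (auto simp: mult.commute)
    qed
    define I where "I = {l\<in>I0. st (A l) = s}"
    have fI: "finite I" unfolding I_def I0_def by auto
    obtain c where c: "\<exists>k\<in>I. c k \<noteq> 0" "\<forall>q. (\<Sum>k\<in>I. c k * U (A k) q) = 0"
      using dep_fun[OF fI, of "\<lambda>l. U (A l)"] s unfolding I_def by blast
    define J where "J = {k\<in>I. c k \<noteq> 0}"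
    have fJ: "finite J" "J \<noteq> {}" using fI c(1) unfolding J_def by auto
    define j where "j = Max J"
    have jJ: "j \<in> J" unfolding j_def using Max_in[OF fJ] .
    have jI: "j \<in> I" "c j \<noteq> 0" using jJ unfolding J_def by auto
    have jge: "k \<le> j" if "k \<in> J" for k unfolding j_def using Max_ge[OF fJ(1) that] .
    define T where "T = matw delta0 delta1 Delta (CF (A j)) (drop (A j) z)"
    define g where "g k = vec_mat (U (A k)) T" for k
    have sum0: "\<forall>q. (\<Sum>k\<in>I. c k * g k q) = 0" unfolding g_def by (rule lin2[OF c(2)])
    have jI0: "j \<in> {M..L}" using jI I0L unfolding I_def by auto
    have Ajt: "A j \<le> t" using A[OF jI0] by auto
    have gj: "g j = vec_mat x (matw delta0 delta1 Delta c0 z)"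
    proof -
      have "matw delta0 delta1 Delta c0 (take len z) = mmul (P (A j)) T"
        unfolding P_def T_def CF_def using mat_seg[of "A j" len delta0 delta1 Delta c0 z] Ajt t(1)
        by (simp add: len_def)
      then show ?thesis unfolding g_def U_def by (simp add: vec_mat_assoc len_def)
    qed
    have gk: "g k \<in> V" if "k \<in> I" "k \<noteq> j" "c k \<noteq> 0" for k
    proof -
      have kJ: "k \<in> J" using that unfolding J_def by auto
      have kj: "k < j" using jge[OF kJ] that(2) by auto
      have kI0: "k \<in> {M..L}" "k \<in> I0" using that(1) I0L unfolding I_def by auto
      have jI0': "j \<in> I0" using jI unfolding I_def by auto
      have Akj: "A k < A j" using Amono[OF kI0(1) jI0 kj] .
      have stk: "st (A k) = s" "st (A j) = s" using that(1) jI unfolding I_def by auto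
      have cvk: "cv (A k) = k" "cv (A j) = j" using A[OF kI0(1)] A[OF jI0] by auto
      define w where "w = drop (A j) z"
      define d where "d = j - k"
      have prem: "\<forall>i<length w. d < snd (foldl (cstep delta0 delta1) (s, j) (take i w))"
      proof (intro allI impI)
        fix i assume i: "i < length w"
        have "foldl (cstep delta0 delta1) (s, j) (take i w) = CF (A j + i)"
        proof -
          have "take i w = drop (A j) (take (A j + i) z)"
            using take_seg[of "A j" i len z] i unfolding w_def len_def by simp
          moreover have "CF (A j + i) = foldl (cstep delta0 delta1) (CF (A j)) (drop (A j) (take (A j + i) z))"
            unfolding CF_def by (rule foldl_seg) simp
          ultimately show ?thesis using CFpair[of "A j"] stk cvk by simp
        qed
        moreover have "d < cv (A j + i)"
        proof -
          have "A j + i \<le> len" using i unfolding w_def len_def by simp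
          consider "i = 0" | "0 < i" "A j + i \<le> t" | "t < A j + i" by linarith
          then show ?thesis
          proof cases
            case 1 then show ?thesis using cvk M1 kI0 kj unfolding d_def by auto
          next
            case 2 then have "j < cv (A j + i)" using A[OF jI0] by auto
            then show ?thesis unfolding d_def by auto
          next
            case 3 then have "M < cv (A j + i)" using True \<open>A j + i \<le> len\<close> by auto
            moreover have "d \<le> K" using kI0 jI0' unfolding d_def I0_def by auto
            ultimately show ?thesis using M1 by auto
          qed
        qed
        ultimately show "d < snd (foldl (cstep delta0 delta1) (s, j) (take i w))" unfolding cv_def by simp
      qed
      have dj: "d \<le> j" unfolding d_def by simp
      note sh = shift[OF wf prem dj, of Delta]
      have jd: "j - d = k" unfolding d_def using kj by simp
      define z' where "z' = take (A k) z @ w"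
      have lz: "length z' < len" unfolding z'_def w_def len_def using Akj Ajt t(1) unfolding len_def by auto
      have CFk: "CF (A k) = (s, j - d)" using CFpair[of "A k"] stk cvk jd by simp
      have CFj: "CF (A j) = (s, j)" using CFpair[of "A j"] stk cvk by simp
      have fz: "foldl (cstep delta0 delta1) c0 z' = foldl (cstep delta0 delta1) (CF (A k)) w"
        unfolding z'_def CF_def by simp
      have fz2: "foldl (cstep delta0 delta1) (CF (A j)) w = CF len"
        unfolding w_def CF_def using foldl_seg[of "A j" len "cstep delta0 delta1" c0 z] Ajt t(1)
        by (simp add: len_def)
      have st': "fst (foldl (cstep delta0 delta1) c0 z') = st len"
        using fz sh fz2 CFk CFj unfolding st_def by simp
      have mz: "matw delta0 delta1 Delta c0 z' = mmul (P (A k)) T"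
        unfolding z'_def P_def T_def using sh CFk CFj matw_app[of delta0 delta1 Delta c0 "take (A k) z" w]
        unfolding CF_def w_def by simp
      have "vec_mat x (matw delta0 delta1 Delta c0 z') \<in> V" using shorter[OF lz st'] .
      then show ?thesis unfolding g_def U_def using mz by (simp add: vec_mat_assoc)
    qed
    have "g j \<in> V" using triangle[OF sub fI jI sum0] gk by blast
    then show False using gj fin_notin by simp
  next
    case False
    then obtain e where e: "t < e" "e \<le> len" "cv e \<le> M" by auto
    have fv: "\<forall>l\<in>{M..L}. \<exists>b. t \<le> b \<and> b \<le> e \<and> cv b = l \<and> (\<forall>k. t \<le> k \<and> k < b \<longrightarrow> l < cv k)"
    proof
      fix l assume "l \<in> {M..L}"
      then show "\<exists>b. t \<le> b \<and> b \<le> e \<and> cv b = l \<and> (\<forall>k. t \<le> k \<and> k < b \<longrightarrow> l < cv k)"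
        using first_visit[OF slow _ e(2), of t l] e cvt by auto
    qed
    then obtain B where B: "\<And>l. l \<in> {M..L} \<Longrightarrow> t \<le> B l \<and> B l \<le> e \<and> cv (B l) = l \<and> (\<forall>k. t \<le> k \<and> k < B l \<longrightarrow> l < cv k)"
      by metis
    have Bmono: "B l' \<le> B l" if "l \<in> {M..L}" "l' \<in> {M..L}" "l < l'" for l l'
    proof (rule ccontr)
      assume "\<not> B l' \<le> B l"
      then show False using B[OF that(1)] B[OF that(2)] that(3) by force
    qed
    define I0 where "I0 = {M..L}"
    have cI0: "card I0 = K^2 + 1" unfolding I0_def L_def by simp
    obtain s where s: "CARD('q \<times> 'q) < card {l\<in>I0. (st (A l), st (B l)) = s}"
    proof -
      have "finite I0" unfolding I0_def by simp
      moreover have "CARD('c \<times> 'c) * CARD('q \<times> 'q) < card I0"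
        using cI0 unfolding K_def by (simp add: power2_eq_square mult_ac)
      ultimately show ?thesis using that pigeon[of I0 "CARD('q \<times> 'q)" "\<lambda>l. (st (A l), st (B l))"]
        by blast
    qed
    define I where "I = {l\<in>I0. (st (A l), st (B l)) = s}"
    have fI: "finite I" unfolding I_def I0_def by auto
    define N where "N l = matw delta0 delta1 Delta (CF (A l)) (drop (A l) (take (B l) z))" for l
    define R where "R l = matw delta0 delta1 Delta (CF (B l)) (drop (B l) z)" for l
    obtain c where c: "\<exists>k\<in>I. c k \<noteq> 0" "\<forall>ab. (\<Sum>k\<in>I. c k * (case ab of (a, b) \<Rightarrow> N k a b)) = 0"
      using dep_fun[OF fI, of "\<lambda>l ab. case ab of (a, b) \<Rightarrow> N l a b"] s unfolding I_def by blast
    have c2: "\<forall>a b. (\<Sum>k\<in>I. c k * N k a b) = 0"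
    proof (intro allI)
      fix a b
      have "(\<Sum>k\<in>I. c k * (case (a, b) of (a, b) \<Rightarrow> N k a b)) = 0" using c(2) by blast
      then show "(\<Sum>k\<in>I. c k * N k a b) = 0" by simp
    qed
    define J where "J = {k\<in>I. c k \<noteq> 0}"
    have fJ: "finite J" "J \<noteq> {}" using fI c(1) unfolding J_def by auto
    define j where "j = Min J"
    have jJ: "j \<in> J" unfolding j_def using Min_in[OF fJ] .
    have jI: "j \<in> I" "c j \<noteq> 0" using jJ unfolding J_def by auto
    have jle: "j \<le> k" if "k \<in> J" for k unfolding j_def using Min_le[OF fJ(1) that] .
    define g where "g k = vec_mat (vec_mat (U (A j)) (N k)) (R j)" for k
    have sum0: "\<forall>q. (\<Sum>k\<in>I. c k * g k q) = 0" unfolding g_def by (rule lin1[OF c2])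
    have jI0: "j \<in> {M..L}" using jI unfolding I_def I0_def by auto
    have Ajt: "A j \<le> t" "t \<le> B j" "B j \<le> len" using A[OF jI0] B[OF jI0] e(2) by auto
    have mj: "matw delta0 delta1 Delta c0 z = mmul (mmul (P (A j)) (N j)) (R j)"
    proof -
      have 1: "matw delta0 delta1 Delta c0 (take len z) = mmul (matw delta0 delta1 Delta c0 (take (B j) z)) (R j)"
        unfolding R_def CF_def using mat_seg[of "B j" len delta0 delta1 Delta c0 z] Ajt
        by (simp add: len_def)
      have 2: "matw delta0 delta1 Delta c0 (take (B j) z) = mmul (P (A j)) (N j)"
        unfolding P_def N_def CF_def using mat_seg[of "A j" "B j" delta0 delta1 Delta c0 z] Ajt by simp
      show ?thesis using 1 2 by (simp add: len_def)
    qed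
    have gj: "g j = vec_mat x (matw delta0 delta1 Delta c0 z)"
      unfolding g_def U_def mj by (simp add: vec_mat_assoc)
    have gk: "g k \<in> V" if "k \<in> I" "k \<noteq> j" "c k \<noteq> 0" for k
    proof -
      have kJ: "k \<in> J" using that unfolding J_def by auto
      have kj: "j < k" using jle[OF kJ] that(2) by auto
      have kI0: "k \<in> {M..L}" using that(1) unfolding I_def I0_def by auto
      have Ajk: "A j < A k" using Amono[OF jI0 kI0 kj] .
      have Bkj: "B k \<le> B j" using Bmono[OF jI0 kI0 kj] .
      have Akt: "A k \<le> t" "t \<le> B k" using A[OF kI0] B[OF kI0] by auto
      obtain s1 s2 where s12: "s = (s1, s2)" by (cases s)
      have stk: "st (A k) = s1" "st (A j) = s1" "st (B k) = s2" "st (B j) = s2"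
        using that(1) jI s12 unfolding I_def by auto
      have cvk: "cv (A k) = k" "cv (A j) = j" "cv (B k) = k" "cv (B j) = j"
        using A[OF kI0] A[OF jI0] B[OF kI0] B[OF jI0] by auto
      define w where "w = drop (A k) (take (B k) z)"
      define d where "d = k - j"
      have prem: "\<forall>i<length w. d < snd (foldl (cstep delta0 delta1) (s1, k) (take i w))"
      proof (intro allI impI)
        fix i assume i: "i < length w"
        have ilen: "A k + i < B k" using i Akt Ajt e(2) Bkj unfolding w_def len_def by auto
        have "foldl (cstep delta0 delta1) (s1, k) (take i w) = CF (A k + i)"
        proof -
          have "take i w = drop (A k) (take (A k + i) z)"
            using take_seg[of "A k" i "B k" z] ilen unfolding w_def by simp
          moreover have "CF (A k + i) = foldl (cstep delta0 delta1) (CF (A k)) (drop (A k) (take (A k + i) z))"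
            unfolding CF_def by (rule foldl_seg) simp
          ultimately show ?thesis using CFpair[of "A k"] stk cvk by simp
        qed
        moreover have "k \<le> cv (A k + i)"
        proof -
          consider "i = 0" | "0 < i" "A k + i \<le> t" | "t \<le> A k + i" by linarith
          then show ?thesis
          proof cases
            case 1 then show ?thesis using cvk by auto
          next
            case 2
            have "A k < A k + i" using 2 by simp
            then have "k < cv (A k + i)" using A[OF kI0] 2(2) by blast
            then show ?thesis by simp
          next
            case 3
            then have "k < cv (A k + i)" using B[OF kI0] ilen by blast
            then show ?thesis by simp
          qed
        qed
        moreover have "d < k" unfolding d_def using kj M1 jI0 by auto
        ultimately show "d < snd (foldl (cstep delta0 delta1) (s1, k) (take i w))" unfolding cv_def by simp
      qed
      have dk: "d \<le> k" unfolding d_def by simp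
      note sh = shift[OF wf prem dk, of Delta]
      have kd: "k - d = j" unfolding d_def using kj by simp
      define z' where "z' = take (A j) z @ w @ drop (B j) z"
      have lz: "length z' < len" unfolding z'_def w_def len_def
        using Ajk Bkj Ajt Akt e(2) unfolding len_def by auto
      have CFAj: "CF (A j) = (s1, k - d)" using CFpair[of "A j"] stk cvk kd by simp
      have CFAk: "CF (A k) = (s1, k)" using CFpair[of "A k"] stk cvk by simp
      have CFBj: "CF (B j) = (s2, j)" using CFpair[of "B j"] stk cvk by simp
      have fw: "foldl (cstep delta0 delta1) (CF (A k)) w = CF (B k)"
        unfolding w_def CF_def using foldl_seg[of "A k" "B k" "cstep delta0 delta1" c0 z] Akt by simp
      have fw2: "foldl (cstep delta0 delta1) (CF (A j)) w = CF (B j)"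
        using sh fw CFAj CFAk CFBj CFpair[of "B k"] stk cvk kd by simp
      have fz3: "foldl (cstep delta0 delta1) (CF (B j)) (drop (B j) z) = CF len"
        unfolding CF_def using foldl_seg[of "B j" len "cstep delta0 delta1" c0 z] Ajt
        by (simp add: len_def)
      have fz: "foldl (cstep delta0 delta1) c0 z' = CF len"
        unfolding z'_def using fw2 fz3 unfolding CF_def by simp
      have st': "fst (foldl (cstep delta0 delta1) c0 z') = st len"
        using fz unfolding st_def by simp
      have mw: "matw delta0 delta1 Delta (CF (A j)) w = N k"
        unfolding N_def w_def[symmetric] using sh CFAj CFAk by simp
      have mz: "matw delta0 delta1 Delta c0 z' = mmul (mmul (P (A j)) (N k)) (R j)"
        unfolding z'_def P_def R_def
        using matw_app[of delta0 delta1 Delta c0 "take (A j) z" "w @ drop (B j) z"]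
          matw_app[of delta0 delta1 Delta "CF (A j)" w "drop (B j) z"] mw fw2
        unfolding CF_def by (simp add: mmul_assoc)
      have "vec_mat x (matw delta0 delta1 Delta c0 z') \<in> V" using shorter[OF lz st'] .
      then show ?thesis unfolding g_def U_def using mz by (simp add: vec_mat_assoc)
    qed
    have "g j \<in> V" using triangle[OF sub fI jI sum0] gk by blast
    then show False using gj fin_notin by simp
  qed
qed

end
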